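(* Let $\delta>0$, $m>64\pi^2$, $\kappa>0$, $\mu^\star>0$, and let $\varepsilon\in(0,1)$, $\ell>0$, $\gamma>0$ satisfy: $\ell\ge\delta$; $-2^5\xi^2+(\mu^\star\varepsilon+6\ell)\xi-(\gamma+1)\ell\le0$ for all $\xi\in\mathbb{R}$; $2\gamma^2-3\ell\ge0$; $e^\varepsilon<\frac{1+2\kappa}{1+\kappa}$; $e^{(\gamma+1)\varepsilon}(1+3\varepsilon^3)<\frac{m}{64\pi^2}$; and $e^{(\ell-\delta)t}(1+(\varepsilon-\ell t)^3)\ge1+\varepsilon^3$ for all $t\in(0,\varepsilon/\ell)$. Put $\tau(t)=\varepsilon-\ell t$, $a(t)=2^5e^{(\gamma+1)\tau}$, $b(t)=8e^{\tau}$ and $$\underline U(s,t):=\frac{a(s^{3/2}+3\tau^3s)}{(s^{1/2}+\tau^3)^3},\qquad \underline W(s,t):=\frac{bs}{s^{1/2}+\tau^3},\qquad(s,t)\in[0,1]\times[0,\varepsilon/\ell).$$ Then for each $t\in[0,\varepsilon/\ell)$ the map $s\mapsto\underline U(s,t)$ on $[0,1]$ is nonnegative, increasing and concave; $\underline U(0,t)=0$ for all $t\in[0,\varepsilon/\ell)$; $\underline U(s,t)\to2^5$ as $t\uparrow\varepsilon/\ell$ for every $s\in(0,1]$; $$\sup_{t\in(0,\varepsilon/\ell)}\underline U(1,t)<\frac{m}{2\pi^2};$$ and $\mathcal P^{\mu^\star}(\underline U,\underline W)\le0$ for all $(s,t)\in(0,1)\times(0,\varepsilon/\ell)$.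
   Context: For functions $\phi,\psi$ and the constant $\mu^\star>0$, the operator is $\mathcal P^{\mu^\star}(\phi,\psi):=\phi_t-16s^{3/2}\phi_{ss}-4\phi_s\big(\psi-\frac{\mu^\star s}{4}\big)$. *)

theory Defs
  imports "HOL-Analysis.Analysis"
begin

definition partial_s :: "(real \<Rightarrow> real \<Rightarrow> real) \<Rightarrow> real \<Rightarrow> real \<Rightarrow> real" where
  "partial_s \<phi> s t = deriv (\<lambda>s'. \<phi> s' t) s"

definition partial_t :: "(real \<Rightarrow> real \<Rightarrow> real) \<Rightarrow> real \<Rightarrow> real \<Rightarrow> real" where
  "partial_t \<phi> s t = deriv (\<lambda>t'. \<phi> s t') t"

definition partial_ss :: "(real \<Rightarrow> real \<Rightarrow> real) \<Rightarrow> real \<Rightarrow> real \<Rightarrow> real" where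
  "partial_ss \<phi> s t = deriv (\<lambda>s'. deriv (\<lambda>s''. \<phi> s'' t) s') s"

definition opP :: "real \<Rightarrow> (real \<Rightarrow> real \<Rightarrow> real) \<Rightarrow> (real \<Rightarrow> real \<Rightarrow> real) \<Rightarrow> real \<Rightarrow> real \<Rightarrow> real" where
  "opP \<mu> \<phi> \<psi> s t =
     partial_t \<phi> s t - 16 * s powr (3/2) * partial_ss \<phi> s t
     - 4 * partial_s \<phi> s t * (\<psi> s t - \<mu> * s / 4)"

definition tau :: "real \<Rightarrow> real \<Rightarrow> real \<Rightarrow> real" where
  "tau eps l t = eps - l * t"

definition aa :: "real \<Rightarrow> real \<Rightarrow> real \<Rightarrow> real \<Rightarrow> real" where
  "aa eps l \<gamma> t = 2^5 * exp ((\<gamma> + 1) * tau eps l t)"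

definition bb :: "real \<Rightarrow> real \<Rightarrow> real \<Rightarrow> real" where
  "bb eps l t = 8 * exp (tau eps l t)"

definition Ulow :: "real \<Rightarrow> real \<Rightarrow> real \<Rightarrow> real \<Rightarrow> real \<Rightarrow> real" where
  "Ulow eps l \<gamma> s t =
     aa eps l \<gamma> t * (s powr (3/2) + 3 * (tau eps l t)^3 * s)
       / (s powr (1/2) + (tau eps l t)^3)^3"

definition Wlow :: "real \<Rightarrow> real \<Rightarrow> real \<Rightarrow> real \<Rightarrow> real" where
  "Wlow eps l s t = bb eps l t * s / (s powr (1/2) + (tau eps l t)^3)"

end

theory Submission
  imports Defs
begin

definition G :: "real \<Rightarrow> real \<Rightarrow> real \<Rightarrow> real" where
  "G A c s = A * (s * sqrt s + 3 * c * s) / (sqrt s + c)^3"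

lemma G_deriv:
  assumes "c > 0" "s > 0"
  shows "(G A c has_real_derivative 3 * A * c^2 / (sqrt s + c)^4) (at s)"
proof -
  have ne: "sqrt s + c \<noteq> 0" using assms by (smt (verit) real_sqrt_gt_zero)
  have "(G A c has_real_derivative
     A * ((1 * sqrt s + s * (inverse (sqrt s) / 2) + 3*c) * (sqrt s + c)^3
      - (s * sqrt s + 3 * c * s) * (3 * (sqrt s + c)^2 * (inverse (sqrt s) / 2))) / ((sqrt s + c)^3)^2) (at s)"
    unfolding G_def[abs_def] using assms ne
    by (auto intro!: derivative_eq_intros simp: field_simps)
  moreover have "A * ((1 * sqrt s + s * (inverse (sqrt s) / 2) + 3*c) * (sqrt s + c)^3
      - (s * sqrt s + 3 * c * s) * (3 * (sqrt s + c)^2 * (inverse (sqrt s) / 2))) / ((sqrt s + c)^3)^2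
     = 3 * A * c^2 / (sqrt s + c)^4"
  proof -
    define x where "x = sqrt s"
    have x: "x > 0" "s = x^2" using assms by (auto simp: x_def)
    show ?thesis unfolding x_def[symmetric] using x ne[folded x_def]
      by (simp add: field_simps) (simp add: algebra_simps power2_eq_square power3_eq_cube eval_nat_numeral)
  qed
  ultimately show ?thesis by simp
qed

lemma Gd_deriv:
  assumes "c > 0" "s > 0"
  shows "((\<lambda>s. 3 * A * c^2 / (sqrt s + c)^4) has_real_derivative - 6 * A * c^2 / (sqrt s * (sqrt s + c)^5)) (at s)"
proof -
  have ne: "sqrt s + c \<noteq> 0" using assms by (smt (verit) real_sqrt_gt_zero)
  have sp: "sqrt s > 0" using assms by simp
  define x where "x = sqrt s"
  have x: "x > 0" "s = x^2" using assms by (auto simp: x_def)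
  have h1: "((\<lambda>y. 3 * A * c^2 / y^4) has_real_derivative -12 * A * c^2 / y^5) (at y)" if "y \<noteq> 0" for y
    using that by (auto intro!: derivative_eq_intros simp: field_simps eval_nat_numeral)
  have h2: "((\<lambda>s. sqrt s + c) has_real_derivative inverse (sqrt s) / 2 + 0) (at s)"
    by (rule DERIV_add[OF DERIV_real_sqrt DERIV_const]) (use assms in simp)
  have "((\<lambda>s. 3 * A * c^2 / (sqrt s + c)^4) has_real_derivative
     (-12 * A * c^2 / (sqrt s + c)^5) * (inverse (sqrt s) / 2 + 0)) (at s)"
    by (rule DERIV_chain2[OF h1[OF ne] h2])
  moreover have "(-12 * A * c^2 / (sqrt s + c)^5) * (inverse (sqrt s) / 2 + 0) = - 6 * A * c^2 / (sqrt s * (sqrt s + c)^5)"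
    using sp ne by (simp add: field_simps)
  ultimately show ?thesis by simp
qed

lemma G_cont: assumes "c > 0" shows "continuous_on {0..} (G A c)"
  unfolding G_def[abs_def]
proof (intro continuous_intros ballI)
  fix s :: real assume "s \<in> {0..}"
  then have "sqrt s + c > 0" using assms by (simp add: add_nonneg_pos)
  then show "(sqrt s + c)^3 \<noteq> 0" by simp
qed

lemma G_nonneg: "c > 0 \<Longrightarrow> A \<ge> 0 \<Longrightarrow> s \<ge> 0 \<Longrightarrow> G A c s \<ge> 0"
  unfolding G_def by (intro divide_nonneg_nonneg mult_nonneg_nonneg) auto

lemma G_zero: "G A c 0 = 0" by (simp add: G_def)

lemma Ulow_G:
  assumes "s \<ge> 0"
  shows "Ulow eps l \<gamma> s t = G (aa eps l \<gamma> t) ((tau eps l t)^3) s"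
proof -
  have "s powr (3/2) = s * sqrt s"
  proof (cases "s = 0")
    case False
    then have "s powr (3/2) = s powr (1 + 1/2)" proof -
      have e: "(3/2::real) = 1 + 1/2" by simp
      show ?thesis by (simp only: e)
    qed
    also have "\<dots> = s * s powr (1/2)" using False assms by (simp only: powr_add, simp)
    finally show ?thesis using assms by (simp add: powr_half_sqrt)
  qed simp
  then show ?thesis using assms unfolding Ulow_def G_def by (simp add: powr_half_sqrt)
qed

lemma convex_on_Icc_interior:
  fixes f f' :: "real \<Rightarrow> real"
  assumes cont: "continuous_on {a..b} f"
    and der: "\<And>x. a < x \<Longrightarrow> x < b \<Longrightarrow> (f has_real_derivative f' x) (at x)"
    and mono: "\<And>x y. a < x \<Longrightarrow> x \<le> y \<Longrightarrow> y < b \<Longrightarrow> f' x \<le> f' y"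
  shows "convex_on {a..b} f"
proof (rule convex_on_linorderI)
  show "convex {a..b}" by simp
next
  fix t x y :: real
  assume t: "t > 0" "t < 1"
  assume xy: "x \<in> {a..b}" "y \<in> {a..b}" "x < y"
  define z where "z = (1 - t) * x + t * y"
  from xy t have xz: "z > x"
    by (simp add: z_def algebra_simps)
  have "y - z = (1 - t) * (y - x)"
    by (simp add: z_def algebra_simps)
  also from xy t have "\<dots> > 0"
    by (intro mult_pos_pos) simp_all
  finally have yz: "z < y"
    by simp
  have c1: "continuous_on {x..z} f" using xy yz by (auto intro: continuous_on_subset[OF cont])
  have c2: "continuous_on {z..y} f" using xy xz by (auto intro: continuous_on_subset[OF cont])
  have dd: "f differentiable (at u)" if "a < u" "u < b" for u
    using der[OF that] real_differentiable_def by blast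
  obtain l1 \<xi> where \<xi>: "x < \<xi>" "\<xi> < z" "DERIV f \<xi> :> l1" "f z - f x = (z - x) * l1"
  proof -
    have "\<exists>l \<xi>. x < \<xi> \<and> \<xi> < z \<and> DERIV f \<xi> :> l \<and> f z - f x = (z - x) * l"
      by (rule MVT[OF xz c1]) (rule dd, use xy yz in auto)
    then show ?thesis using that by blast
  qed
  obtain l2 \<eta> where \<eta>: "z < \<eta>" "\<eta> < y" "DERIV f \<eta> :> l2" "f y - f z = (y - z) * l2"
  proof -
    have "\<exists>l \<eta>. z < \<eta> \<and> \<eta> < y \<and> DERIV f \<eta> :> l \<and> f y - f z = (y - z) * l"
      by (rule MVT[OF yz c2]) (rule dd, use xy xz in auto)
    then show ?thesis using that by blast
  qed
  have l1: "l1 = f' \<xi>" using \<xi> der[of \<xi>] xy yz DERIV_unique by force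
  have l2: "l2 = f' \<eta>" using \<eta> der[of \<eta>] xy xz DERIV_unique by force
  have "l1 \<le> l2" unfolding l1 l2 using xy \<xi> \<eta> by (intro mono) auto
  then have "(f y - f z) * (z - x) \<ge> (f z - f x) * (y - z)"
  proof -
    have "(y - z) * (z - x) * l1 \<le> (y - z) * (z - x) * l2"
      using \<open>l1 \<le> l2\<close> xz yz by (intro mult_left_mono) auto
    then show ?thesis unfolding \<xi>(4) \<eta>(4) by (simp add: mult_ac)
  qed
  also have "z - x = t * (y - x)"
    by (simp add: z_def algebra_simps)
  also have "y - z = (1 - t) * (y - x)"
    by (simp add: z_def algebra_simps)
  finally have "(f y - f z) * t \<ge> (f z - f x) * (1 - t)"
    using xy by simp
  then show "(1 - t) * f x + t * f y \<ge> f ((1 - t) *\<^sub>R x + t *\<^sub>R y)"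
    by (simp add: z_def algebra_simps)
qed

lemma T_deriv:
  assumes "x > 0" "eps - l * t > 0"
  shows "((\<lambda>t. 32 * exp ((\<gamma> + 1) * (eps - l * t)) * (x^2 * x + 3 * (eps - l * t)^3 * x^2) / (x + (eps - l * t)^3)^3)
     has_real_derivative
     (- (\<gamma> + 1) * l * (32 * exp ((\<gamma> + 1) * (eps - l * t))) * x^2 * (x + 3 * (eps - l * t)^3) / (x + (eps - l * t)^3)^3
      + 18 * l * (32 * exp ((\<gamma> + 1) * (eps - l * t))) * (eps - l * t)^5 * x^2 / (x + (eps - l * t)^3)^4)) (at t)"
proof -
  define T where "T = eps - l * t"
  have T: "T > 0" using assms by (simp add: T_def)
  have ne: "x + T^3 > 0" using T assms by (simp add: add_pos_pos)
  show ?thesis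
    apply (rule DERIV_cong)
     apply (rule derivative_eq_intros refl)+
      apply (simp only: T_def[symmetric]) using ne apply simp
     apply (rule refl)
    apply (simp only: T_def[symmetric])
    using ne assms(1) apply (simp add: field_simps)
    apply (simp add: algebra_simps eval_nat_numeral)
    done
qed

lemma key_ineq:
  fixes a x \<tau> E \<mu> l \<gamma> eps :: real
  assumes "a > 0" "x > 0" "\<tau> > 0" "\<tau> \<le> eps" "E \<ge> 1 + \<tau>" "\<mu> > 0" "l > 0" "\<gamma> > 0"
    and hq: "- (2^5) * (\<tau>^2 / (x + \<tau>^3))^2 + (\<mu> * eps + 6 * l) * (\<tau>^2 / (x + \<tau>^3)) - (\<gamma> + 1) * l \<le> 0"
  shows "(- (\<gamma> + 1) * l * a * x^2 * (x + 3 * \<tau>^3) / (x + \<tau>^3)^3 + 18 * l * a * \<tau>^5 * x^2 / (x + \<tau>^3)^4)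
     - 16 * (x^2 * x) * (- 6 * a * (\<tau>^3)^2 / (x * (x + \<tau>^3)^5))
     - 4 * (3 * a * (\<tau>^3)^2 / (x + \<tau>^3)^4) * (8 * E * x^2 / (x + \<tau>^3) - \<mu> * x^2 / 4) \<le> 0"
proof -
  define y where "y = x + \<tau>^3"
  have "\<tau>^3 > 0" using assms by simp
  then have y: "y > 0" using assms by (simp add: y_def add_pos_pos)
  define B where "B = - (\<gamma> + 1) * l * (x + 3 * \<tau>^3) * y + 18 * l * \<tau>^5 + 96 * \<tau>^6 * (1 - E) / y + 3 * \<mu> * \<tau>^6"
  have eq: "(- (\<gamma> + 1) * l * a * x^2 * (x + 3 * \<tau>^3) / (x + \<tau>^3)^3 + 18 * l * a * \<tau>^5 * x^2 / (x + \<tau>^3)^4)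
     - 16 * (x^2 * x) * (- 6 * a * (\<tau>^3)^2 / (x * (x + \<tau>^3)^5))
     - 4 * (3 * a * (\<tau>^3)^2 / (x + \<tau>^3)^4) * (8 * E * x^2 / (x + \<tau>^3) - \<mu> * x^2 / 4)
     = a * x^2 / y^4 * B"
    unfolding y_def[symmetric] B_def using y assms(2)
    by (simp add: field_simps) (simp add: algebra_simps eval_nat_numeral)
  have h1: "3 * \<tau>^3 * y * (- (2^5) * (\<tau>^2 / y)^2 + (\<mu> * eps + 6 * l) * (\<tau>^2 / y) - (\<gamma> + 1) * l) \<le> 0"
    using hq y assms unfolding y_def[symmetric] by (intro mult_nonneg_nonpos) auto
  have h2: "3 * \<tau>^3 * y * (- (2^5) * (\<tau>^2 / y)^2 + (\<mu> * eps + 6 * l) * (\<tau>^2 / y) - (\<gamma> + 1) * l)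
      = - 96 * \<tau>^7 / y + 3 * \<mu> * eps * \<tau>^5 + 18 * l * \<tau>^5 - 3 * (\<gamma> + 1) * l * \<tau>^3 * y"
    using y by (simp add: field_simps eval_nat_numeral)
  have i1: "96 * \<tau>^6 * (1 - E) / y \<le> - 96 * \<tau>^7 / y"
  proof -
    have h: "96 * \<tau>^6 * (1 - E) \<le> 96 * \<tau>^6 * (- \<tau>)" using assms by (intro mult_left_mono) auto
    have "96 * \<tau>^6 * (1 - E) / y \<le> 96 * \<tau>^6 * (- \<tau>) / y" using divide_right_mono[OF h] y by simp
    also have "96 * \<tau>^6 * (- \<tau>) / y = - 96 * \<tau>^7 / y" by (simp add: eval_nat_numeral)
    finally show ?thesis .
  qed
  have i2: "3 * \<mu> * \<tau>^6 \<le> 3 * \<mu> * eps * \<tau>^5"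
  proof -
    have "\<tau>^5 * \<tau> \<le> \<tau>^5 * eps" using assms by (intro mult_left_mono) auto
    then show ?thesis using assms by (simp add: eval_nat_numeral)
  qed
  have i3: "- (\<gamma> + 1) * l * (x + 3 * \<tau>^3) * y \<le> - 3 * (\<gamma> + 1) * l * \<tau>^3 * y"
  proof -
    have "(\<gamma> + 1) * l * y * (3 * \<tau>^3) \<le> (\<gamma> + 1) * l * y * (x + 3 * \<tau>^3)"
      using assms y by (intro mult_left_mono) auto
    then show ?thesis by (simp add: algebra_simps)
  qed
  have "B \<le> 0" unfolding B_def using h1 h2 i1 i2 i3 by linarith
  then have "a * x^2 / y^4 * B \<le> 0" using assms y by (intro mult_nonneg_nonpos) auto
  then show ?thesis using eq by simp
qed

lemma G_deriv_pos: assumes "c > 0" "A > 0" "s \<ge> 0" shows "3 * A * c^2 / (sqrt s + c)^4 > 0"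
proof -
  have "sqrt s + c > 0" using assms real_sqrt_ge_zero[of s] by linarith
  then show ?thesis using assms by simp
qed

lemma G_deriv_anti: assumes "c > 0" "A > 0" "0 \<le> x" "x \<le> y"
  shows "3 * A * c^2 / (sqrt y + c)^4 \<le> 3 * A * c^2 / (sqrt x + c)^4"
proof -
  have hx: "sqrt x \<ge> 0" using assms by simp
  have hxy: "sqrt x \<le> sqrt y" using assms by simp
  have p1: "(sqrt x + c)^4 \<le> (sqrt y + c)^4" by (rule power_mono) (use hx hxy assms in linarith)+
  have "sqrt x + c > 0" using hx assms by linarith
  then have p2: "(sqrt x + c)^4 > 0" by simp
  have "sqrt y + c > 0" using hx hxy assms by linarith
  then have p3: "(sqrt y + c)^4 > 0" by simp
  show ?thesis by (rule divide_left_mono[OF p1]) (use assms p2 p3 in simp_all)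
qed

lemma slice_props:
  assumes c: "c > 0" and A: "A > 0"
  shows "(\<forall>s \<in> {0..1}. G A c s \<ge> 0) \<and> strict_mono_on {0..1} (G A c) \<and> concave_on {0..1} (G A c)"
proof (intro conjI ballI)
  show "G A c s \<ge> 0" if "s \<in> {0..1}" for s using G_nonneg[OF c, of A s] A that by auto
  show "strict_mono_on {0..1} (G A c)"
  proof (rule strict_mono_onI)
    fix r s :: real assume rs: "r \<in> {0..1}" "s \<in> {0..1}" "r < s"
    show "G A c r < G A c s"
    proof (rule DERIV_pos_imp_increasing_open[OF \<open>r < s\<close>])
      fix x assume "r < x" "x < s"
      then show "\<exists>y. DERIV (G A c) x :> y \<and> y > 0"
        using G_deriv[OF c, of x A] G_deriv_pos[OF c A, of x] rs by auto
    next
      show "continuous_on {r..s} (G A c)"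
        using rs by (auto intro: continuous_on_subset[OF G_cont[OF c]])
    qed
  qed
  show "concave_on {0..1} (G A c)"
    unfolding concave_on_def
  proof (rule convex_on_Icc_interior[where f' = "\<lambda>s. - (3 * A * c^2 / (sqrt s + c)^4)"])
    show "continuous_on {0..1} (\<lambda>x. - G A c x)"
      by (intro continuous_intros) (auto intro: continuous_on_subset[OF G_cont[OF c]])
    show "((\<lambda>x. - G A c x) has_real_derivative - (3 * A * c^2 / (sqrt x + c)^4)) (at x)" if "0 < x" "x < 1" for x
      using that by (intro derivative_intros G_deriv[OF c])
    show "- (3 * A * c^2 / (sqrt x + c)^4) \<le> - (3 * A * c^2 / (sqrt y + c)^4)" if "0 < x" "x \<le> y" "y < 1" for x y
      using G_deriv_anti[OF c A, of x y] that by simp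
  qed
qed

lemma Ulow_slice:
  assumes "\<And>s. s \<in> {0..1} \<Longrightarrow> f s = g s"
  shows "((\<forall>s \<in> {0..1}. g s \<ge> 0) \<and> strict_mono_on {0..1} g \<and> concave_on {0..1} g)
     \<Longrightarrow> ((\<forall>s \<in> {0..1}. f s \<ge> 0) \<and> strict_mono_on {0..1} f \<and> concave_on {0..1} f)"
  using assms unfolding strict_mono_on_def concave_on_iff
  by (smt (verit) convex_alt)

theorem lemma3p7:
  fixes \<delta> m \<kappa> \<mu> eps l \<gamma> :: real
  assumes "\<delta> > 0" and "m > 64 * pi^2" and "\<kappa> > 0" and "\<mu> > 0"
    and "0 < eps" and "eps < 1" and "l > 0" and "\<gamma> > 0"
    and "l \<ge> \<delta>"
    and "\<forall>\<xi>::real. - (2^5) * \<xi>^2 + (\<mu> * eps + 6 * l) * \<xi> - (\<gamma> + 1) * l \<le> 0"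
    and "2 * \<gamma>^2 - 3 * l \<ge> 0"
    and "exp eps < (1 + 2 * \<kappa>) / (1 + \<kappa>)"
    and "exp ((\<gamma> + 1) * eps) * (1 + 3 * eps^3) < m / (64 * pi^2)"
    and "\<forall>t \<in> {0<..<eps / l}. exp ((l - \<delta>) * t) * (1 + (eps - l * t)^3) \<ge> 1 + eps^3"
  shows "(\<forall>t \<in> {0..<eps / l}.
            (\<forall>s \<in> {0..1}. Ulow eps l \<gamma> s t \<ge> 0)
          \<and> strict_mono_on {0..1} (\<lambda>s. Ulow eps l \<gamma> s t)
          \<and> concave_on {0..1} (\<lambda>s. Ulow eps l \<gamma> s t))
       \<and> (\<forall>t \<in> {0..<eps / l}. Ulow eps l \<gamma> 0 t = 0)
       \<and> (\<forall>s \<in> {0<..1}. ((\<lambda>t. Ulow eps l \<gamma> s t) \<longlongrightarrow> 2^5) (at_left (eps / l)))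
       \<and> (SUP t \<in> {0<..<eps / l}. Ulow eps l \<gamma> 1 t) < m / (2 * pi^2)
       \<and> (\<forall>s \<in> {0<..<1}. \<forall>t \<in> {0<..<eps / l}.
            opP \<mu> (Ulow eps l \<gamma>) (Wlow eps l) s t \<le> 0)"
proof -
  have l0: "l > 0" and e0: "eps > 0" using assms by auto
  have tau_pos: "tau eps l t > 0" if "t < eps / l" for t
    using that l0 by (simp add: tau_def field_simps)
  have tau_le: "tau eps l t \<le> eps" if "t \<ge> 0" for t
    using that l0 by (simp add: tau_def)
  have aa_pos: "aa eps l \<gamma> t > 0" for t by (simp add: aa_def)
  have P1: "\<forall>t \<in> {0..<eps / l}.
            (\<forall>s \<in> {0..1}. Ulow eps l \<gamma> s t \<ge> 0)
          \<and> strict_mono_on {0..1} (\<lambda>s. Ulow eps l \<gamma> s t)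
          \<and> concave_on {0..1} (\<lambda>s. Ulow eps l \<gamma> s t)"
  proof
    fix t assume t: "t \<in> {0..<eps / l}"
    have c: "(tau eps l t)^3 > 0" using tau_pos[of t] t by simp
    show "(\<forall>s \<in> {0..1}. Ulow eps l \<gamma> s t \<ge> 0)
          \<and> strict_mono_on {0..1} (\<lambda>s. Ulow eps l \<gamma> s t)
          \<and> concave_on {0..1} (\<lambda>s. Ulow eps l \<gamma> s t)"
      by (rule Ulow_slice[OF _ slice_props[OF c aa_pos]]) (simp add: Ulow_G)
  qed
  have P2: "\<forall>t \<in> {0..<eps / l}. Ulow eps l \<gamma> 0 t = 0"
    by (simp add: Ulow_G G_zero)
  have P3: "\<forall>s \<in> {0<..1}. ((\<lambda>t. Ulow eps l \<gamma> s t) \<longlongrightarrow> 2^5) (at_left (eps / l))"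
  proof
    fix s :: real assume s: "s \<in> {0<..1}"
    have sp: "s powr (1/2) > 0" using s by simp
    have te: "tau eps l (eps / l) = 0" using l0 by (simp add: tau_def)
    have val: "Ulow eps l \<gamma> s (eps / l) = 2^5"
    proof -
      have "(s powr (1/2))^3 = s powr (3/2)"
        using s by (simp add: powr_realpow[symmetric] powr_powr)
      then show ?thesis using sp unfolding Ulow_def aa_def te by simp
    qed
    have "isCont (\<lambda>t. Ulow eps l \<gamma> s t) (eps / l)"
      unfolding Ulow_def aa_def tau_def
      using sp l0 by (intro continuous_intros) simp
    then have "((\<lambda>t. Ulow eps l \<gamma> s t) \<longlongrightarrow> 2^5) (at (eps / l))"
      using val by (metis isContD)
    then show "((\<lambda>t. Ulow eps l \<gamma> s t) \<longlongrightarrow> 2^5) (at_left (eps / l))"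
      by (rule Lim_at_imp_Lim_at_within)
  qed
  have P4: "(SUP t \<in> {0<..<eps / l}. Ulow eps l \<gamma> 1 t) < m / (2 * pi^2)"
  proof -
    define M where "M = 32 * (exp ((\<gamma> + 1) * eps) * (1 + 3 * eps^3))"
    have "M < 32 * (m / (64 * pi^2))" unfolding M_def using assms(13) by simp
    also have "\<dots> = m / (2 * pi^2)" by simp
    finally have M: "M < m / (2 * pi^2)" .
    have "(SUP t \<in> {0<..<eps / l}. Ulow eps l \<gamma> 1 t) \<le> M"
    proof (rule cSUP_least)
      show "{0<..<eps / l} \<noteq> {}" using divide_pos_pos[OF e0 l0] by simp
    next
      fix t assume t: "t \<in> {0<..<eps / l}"
      define T where "T = tau eps l t"
      have T: "T > 0" "T \<le> eps" using tau_pos[of t] tau_le[of t] t by (auto simp: T_def)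
      have "Ulow eps l \<gamma> 1 t = aa eps l \<gamma> t * (1 + 3 * T^3) / (1 + T^3)^3"
        by (simp add: Ulow_def T_def)
      also have "\<dots> \<le> aa eps l \<gamma> t * (1 + 3 * T^3)"
      proof -
        have "1 \<le> (1 + T^3)^3" using T by simp
        moreover have "0 \<le> aa eps l \<gamma> t * (1 + 3 * T^3)" using T aa_pos[of t] by simp
        ultimately have "aa eps l \<gamma> t * (1 + 3 * T^3) / (1 + T^3)^3 \<le> aa eps l \<gamma> t * (1 + 3 * T^3) / 1"
          using T by (intro divide_left_mono) (auto simp: add_pos_pos)
        then show ?thesis by simp
      qed
      also have "\<dots> \<le> M" unfolding M_def aa_def T_def[symmetric]
      proof -
        have "exp ((\<gamma> + 1) * T) \<le> exp ((\<gamma> + 1) * eps)" using T assms(8) by simp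
        moreover have "1 + 3 * T^3 \<le> 1 + 3 * eps^3" using T power_mono[of T eps 3] by simp
        ultimately show "2 ^ 5 * exp ((\<gamma> + 1) * T) * (1 + 3 * T ^ 3) \<le> 32 * (exp ((\<gamma> + 1) * eps) * (1 + 3 * eps ^ 3))"
          using T by (simp add: mult_mono)
      qed
      finally show "Ulow eps l \<gamma> 1 t \<le> M" .
    qed
    then show ?thesis using M by linarith
  qed
  have P5: "\<forall>s \<in> {0<..<1}. \<forall>t \<in> {0<..<eps / l}. opP \<mu> (Ulow eps l \<gamma>) (Wlow eps l) s t \<le> 0"
  proof (intro ballI)
    fix s t :: real assume s: "s \<in> {0<..<1}" and t: "t \<in> {0<..<eps / l}"
    define T where "T = eps - l * t"
    define x where "x = sqrt s"
    define A where "A = 32 * exp ((\<gamma> + 1) * T)"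
    have T: "T > 0" "T \<le> eps" using tau_pos[of t] tau_le[of t] t by (auto simp: T_def tau_def)
    have x: "x > 0" using s by (simp add: x_def)
    have sx: "s = x^2" using s by (simp add: x_def)
    have A: "A > 0" by (simp add: A_def)
    have tauT: "tau eps l t = T" by (simp add: tau_def T_def)
    have aaA: "aa eps l \<gamma> t = A" by (simp add: aa_def A_def tauT)
    have c: "T^3 > 0" using T by simp
    have Ueq: "\<And>y. y \<in> {0<..} \<Longrightarrow> G A (T^3) y = Ulow eps l \<gamma> y t"
      by (simp add: Ulow_G aaA tauT)
    have psy: "deriv (\<lambda>s''. Ulow eps l \<gamma> s'' t) y = 3 * A * (T^3)^2 / (sqrt y + T^3)^4" if "y > 0" for y
      by (rule DERIV_imp_deriv, rule has_field_derivative_transform_within_open[OF G_deriv[OF c that] open_greaterThan[of 0]])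
        (use that Ueq in auto)
    have ps: "partial_s (Ulow eps l \<gamma>) s t = 3 * A * (T^3)^2 / (x + T^3)^4"
      unfolding partial_s_def x_def using s by (simp add: psy)
    have pss: "partial_ss (Ulow eps l \<gamma>) s t = - 6 * A * (T^3)^2 / (x * (x + T^3)^5)"
      unfolding partial_ss_def x_def
      by (rule DERIV_imp_deriv, rule has_field_derivative_transform_within_open[OF Gd_deriv[OF c, of s] open_greaterThan[of 0]])
        (use s psy in auto)
    have feq: "(\<lambda>t'. Ulow eps l \<gamma> s t') = (\<lambda>t'. 32 * exp ((\<gamma> + 1) * (eps - l * t')) * (x^2 * x + 3 * (eps - l * t')^3 * x^2) / (x + (eps - l * t')^3)^3)"
    proof
      fix t'
      have "Ulow eps l \<gamma> s t' = 32 * exp ((\<gamma> + 1) * (eps - l * t')) * (s * x + 3 * (eps - l * t')^3 * s) / (x + (eps - l * t')^3)^3"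
        using s by (simp add: Ulow_G G_def aa_def tau_def x_def)
      then show "Ulow eps l \<gamma> s t' = 32 * exp ((\<gamma> + 1) * (eps - l * t')) * (x^2 * x + 3 * (eps - l * t')^3 * x^2) / (x + (eps - l * t')^3)^3"
        using sx by simp
    qed
    have pt: "partial_t (Ulow eps l \<gamma>) s t =
       - (\<gamma> + 1) * l * A * x^2 * (x + 3 * T^3) / (x + T^3)^3 + 18 * l * A * T^5 * x^2 / (x + T^3)^4"
      unfolding partial_t_def feq
      using DERIV_imp_deriv[OF T_deriv[of x eps l t \<gamma>]] x T unfolding T_def[symmetric] A_def[symmetric]
      by simp
    have W: "Wlow eps l s t = 8 * exp T * x^2 / (x + T^3)"
      using s by (simp add: Wlow_def bb_def tauT powr_half_sqrt x_def)
    have p32: "s powr (3/2) = x^2 * x"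
    proof -
      have "s powr (3/2) = s powr (1 + 1/2)"
      proof -
        have e: "(3/2::real) = 1 + 1/2" by simp
        show ?thesis by (simp only: e)
      qed
      also have "\<dots> = s * s powr (1/2)" using s by (simp only: powr_add, simp)
      finally have "s powr (3/2) = s * s powr (1/2)" .
      moreover have "s powr (1/2) = x" using s by (simp add: powr_half_sqrt x_def)
      ultimately show ?thesis using sx by simp
    qed
    have "opP \<mu> (Ulow eps l \<gamma>) (Wlow eps l) s t =
       (- (\<gamma> + 1) * l * A * x^2 * (x + 3 * T^3) / (x + T^3)^3 + 18 * l * A * T^5 * x^2 / (x + T^3)^4)
     - 16 * (x^2 * x) * (- 6 * A * (T^3)^2 / (x * (x + T^3)^5))
     - 4 * (3 * A * (T^3)^2 / (x + T^3)^4) * (8 * exp T * x^2 / (x + T^3) - \<mu> * x^2 / 4)"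
      unfolding opP_def pt ps pss W p32 using sx by simp
    also have "\<dots> \<le> 0"
    proof (rule key_ineq[OF A x T(1) T(2) _ assms(4) l0 assms(8)])
      show "1 + T \<le> exp T" by simp
      show "- (2^5) * (T^2 / (x + T^3))^2 + (\<mu> * eps + 6 * l) * (T^2 / (x + T^3)) - (\<gamma> + 1) * l \<le> 0"
        using assms(10) by blast
    qed
    finally show "opP \<mu> (Ulow eps l \<gamma>) (Wlow eps l) s t \<le> 0" .
  qed
  show ?thesis using P1 P2 P3 P4 P5 by blast
qed

end
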